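(* For every DBI normal formula $\varphi$, the pointed action model $(\mathcal{U}_\varphi,0)$ is idempotent: for every pointed Kripke model $(\mathcal{M},w)$, the pointed updates $\bigl(\mathcal{M}\odot\mathcal{U}_\varphi,(w,0)\bigr)$ and $\bigl((\mathcal{M}\odot\mathcal{U}_\varphi)\odot\mathcal{U}_\varphi,((w,0),0)\bigr)$ are both defined and are isomorphic as pointed Kripke models.
   Context: Agents $\mathcal{A}=\{1,\dots,n\}$, $n>1$; language $\mathcal{L}$: $\varphi ::= p \mid \neg\varphi \mid (\varphi\wedge\varphi)\mid B_i\varphi$, $\top$ the usual tautology. Kripke model $\mathcal{M}=\langle S,R,V\rangle$ (nonempty $S$, $R_i\subseteq S\times S$, $V:\mathit{Prop}\to 2^S$), standard truth. Action model $\mathcal{U}=\langle E,Q,\mathsf{pre}\rangle$ (nonempty $E$, $Q_i\subseteq E\times E$, $\mathsf{pre}:E\to\mathcal{L}$). Pointed update of $(\mathcal{M},w)$ with $(\mathcal{U},\alpha)$, defined iff $\mathcal{M},w\vDash\mathsf{pre}(\alpha)$: with $T=\{(x,\beta)\in S\times E\mid\mathcal{M},x\vDash\mathsf{pre}(\beta)\}$, $\mathcal{M}\odot\mathcal{U}=\langle S^{\mathcal U},R^{\mathcal U},V^{\mathcal U}\rangle$ where $S^{\mathcal U}$ is the smallest subset of $T$ containing $(w,\alpha)$ closed under: $(x,\beta)\in S^{\mathcal U}$, $(u,\gamma)\in T$, $xR_iu$, $\beta Q_i\gamma$ imply $(u,\gamma)\in S^{\mathcal U}$; $R^{\mathcal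 U}_i$ relates $(x,\beta),(u,\gamma)\in S^{\mathcal U}$ iff $xR_iu$ and $\beta Q_i\gamma$; $V^{\mathcal U}(p)=\{(x,\beta)\in S^{\mathcal U}\mid x\in V(p)\}$; the result is the pointed model $(\mathcal{M}\odot\mathcal{U},(w,\alpha))$. Two pointed Kripke models are isomorphic if there is a bijection of worlds preserving the relations, the valuation and the point. Target agents: $\mathsf{ta}(p)=\varnothing$, $\mathsf{ta}(\neg\phi)=\mathsf{ta}(\phi)$, $\mathsf{ta}(\phi\wedge\psi)=\mathsf{ta}(\phi)\cup\mathsf{ta}(\psi)$, $\mathsf{ta}(B_i\phi)=\{i\}$. DBI formulas: $\varphi ::= B_i\xi \mid B_i(\xi\wedge\varphi)\mid(\varphi\wedge\varphi)\mid B_i\varphi$, $\xi$ purely propositional. DBI normal: $B_i\xi$ always; $B_i\varphi$, $B_i(\xi\wedge\varphi)$ iff $\varphi$ DBI normal and $i\notin\mathsf{ta}(\varphi)$; $\varphi\wedge\psi$ iff both DBI normal and $\mathsf{ta}(\varphi)\cap\mathsf{ta}(\psi)=\varnothing$. Action model $\mathcal{U}_\varphi=\langle E^\varphi,Q^\varphi,\mathsf{pre}^\varphi\rangle$ for DBI normal $\varphi$, recursively; always $E^\varphi=\{0,-1\}\sqcup D^\varphi$, $\varnothing\ne D^\varphi\subseteq\{1,2,\dots\}$, $\mathsf{pre}^\varphi(0)=\mathsf{pre}^\varphi(-1)=\top$; $\underline{Q}_j:=Q_j\cap((E\setminus\{0\})\times(E\setminus\{0\}))$. (1) $\varphi=B_i\xi$: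 $D=\{m\}$, $\mathsf{pre}(m)=\xi$, $Q_j=\{(0,-1),(m,-1),(-1,-1)\}$ ($j\ne i$), $Q_i=\{(0,m),(m,m),(-1,-1)\}$. (2) $\varphi=B_i\psi$: fresh $m\ge1$, $m\notin D^\psi$; $D^\varphi=D^\psi\sqcup\{m\}$; $\mathsf{pre}^\varphi$ extends $\mathsf{pre}^\psi$ with $\mathsf{pre}^\varphi(m)=\top$; $Q^\varphi_j=\underline{Q}^\psi_j\cup\{(0,-1)\}\cup\{(m,k)\mid(0,k)\in Q^\psi_j\}$ ($j\ne i$); $Q^\varphi_i=\underline{Q}^\psi_i\cup\{(0,m),(m,m)\}$. (3) $\varphi=B_i(\xi\wedge\psi)$: as (2) but $\mathsf{pre}^\varphi(m)=\xi$. (4) $\varphi=\psi\wedge\theta$: with $D^\psi\cap D^\theta=\varnothing$, $D^\varphi=D^\psi\sqcup D^\theta$, $\mathsf{pre}^\varphi=\mathsf{pre}^\psi\cup\mathsf{pre}^\theta$, $Q^\varphi_j=\underline{Q}^\psi_j\cup\underline{Q}^\theta_j\cup\{(0,k)\mid(0,k)\in Q^\psi_j\cup Q^\theta_j, k\in D^\psi\sqcup D^\theta\}\cup\{(0,-1)\mid\text{no such }k\text{ exists}\}$. *)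

theory Defs
  imports Main
begin

datatype ('ag, 'p) fm =
    Prop 'p
  | Neg "('ag, 'p) fm"
  | Conj "('ag, 'p) fm" "('ag, 'p) fm"
  | B 'ag "('ag, 'p) fm"

definition TT :: "('ag, 'p) fm" where
  "TT = Neg (Conj (Prop undefined) (Neg (Prop undefined)))"

fun propositional :: "('ag, 'p) fm \<Rightarrow> bool" where
  "propositional (Prop p) = True"
| "propositional (Neg f) = propositional f"
| "propositional (Conj f g) = (propositional f \<and> propositional g)"
| "propositional (B i f) = False"

fun ta :: "('ag, 'p) fm \<Rightarrow> 'ag set" where
  "ta (Prop p) = {}"
| "ta (Neg f) = ta f"
| "ta (Conj f g) = ta f \<union> ta g"
| "ta (B i f) = {i}"

inductive dbi :: "('ag, 'p) fm \<Rightarrow> bool" where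
  dbi_B_prop: "propositional \<xi> \<Longrightarrow> dbi (B i \<xi>)"
| dbi_B_conj: "propositional \<xi> \<Longrightarrow> dbi \<phi> \<Longrightarrow> dbi (B i (Conj \<xi> \<phi>))"
| dbi_conj: "dbi \<phi> \<Longrightarrow> dbi \<psi> \<Longrightarrow> dbi (Conj \<phi> \<psi>)"
| dbi_B: "dbi \<phi> \<Longrightarrow> dbi (B i \<phi>)"

inductive dbi_normal :: "('ag, 'p) fm \<Rightarrow> bool" where
  dn_B_prop: "propositional \<xi> \<Longrightarrow> dbi_normal (B i \<xi>)"
| dn_B: "dbi_normal \<phi> \<Longrightarrow> i \<notin> ta \<phi> \<Longrightarrow> dbi_normal (B i \<phi>)"
| dn_B_conj: "propositional \<xi> \<Longrightarrow> dbi_normal \<phi> \<Longrightarrow> i \<notin> ta \<phi>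
               \<Longrightarrow> dbi_normal (B i (Conj \<xi> \<phi>))"
| dn_conj: "dbi_normal \<phi> \<Longrightarrow> dbi_normal \<psi> \<Longrightarrow> ta \<phi> \<inter> ta \<psi> = {}
               \<Longrightarrow> dbi_normal (Conj \<phi> \<psi>)"

record ('w, 'ag, 'p) kripke =
  worlds :: "'w set"
  rel :: "'ag \<Rightarrow> ('w \<times> 'w) set"
  val :: "'p \<Rightarrow> 'w set"

definition kripke_wf :: "('w, 'ag, 'p) kripke \<Rightarrow> bool" where
  "kripke_wf M \<longleftrightarrow> worlds M \<noteq> {} \<and> (\<forall>i. rel M i \<subseteq> worlds M \<times> worlds M)
                  \<and> (\<forall>p. val M p \<subseteq> worlds M)"

fun sat :: "('w, 'ag, 'p) kripke \<Rightarrow> 'w \<Rightarrow> ('ag, 'p) fm \<Rightarrow> bool" where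
  "sat M w (Prop p) = (w \<in> val M p)"
| "sat M w (Neg f) = (\<not> sat M w f)"
| "sat M w (Conj f g) = (sat M w f \<and> sat M w g)"
| "sat M w (B i f) = (\<forall>u. (w, u) \<in> rel M i \<longrightarrow> sat M u f)"

record ('ag, 'p) amodel =
  events :: "int set"
  arel :: "'ag \<Rightarrow> (int \<times> int) set"
  pre :: "int \<Rightarrow> ('ag, 'p) fm"

definition upd_defined :: "('w, 'ag, 'p) kripke \<Rightarrow> 'w \<Rightarrow> ('ag, 'p) amodel \<Rightarrow> int \<Rightarrow> bool" where
  "upd_defined M w U \<alpha> \<longleftrightarrow> w \<in> worlds M \<and> \<alpha> \<in> events U \<and> sat M w (pre U \<alpha>)"

definition upd_T :: "('w, 'ag, 'p) kripke \<Rightarrow> ('ag, 'p) amodel \<Rightarrow> ('w \<times> int) set" where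
  "upd_T M U = {(x, \<beta>). x \<in> worlds M \<and> \<beta> \<in> events U \<and> sat M x (pre U \<beta>)}"

inductive_set upd_worlds :: "('w, 'ag, 'p) kripke \<Rightarrow> 'w \<Rightarrow> ('ag, 'p) amodel \<Rightarrow> int \<Rightarrow> ('w \<times> int) set"
  for M w U \<alpha> where
  base: "(w, \<alpha>) \<in> upd_T M U \<Longrightarrow> (w, \<alpha>) \<in> upd_worlds M w U \<alpha>"
| step: "(x, \<beta>) \<in> upd_worlds M w U \<alpha> \<Longrightarrow> (u, \<gamma>) \<in> upd_T M U \<Longrightarrow> (x, u) \<in> rel M i
         \<Longrightarrow> (\<beta>, \<gamma>) \<in> arel U i \<Longrightarrow> (u, \<gamma>) \<in> upd_worlds M w U \<alpha>"

definition upd :: "('w, 'ag, 'p) kripke \<Rightarrow> 'w \<Rightarrow> ('ag, 'p) amodel \<Rightarrow> int \<Rightarrow> ('w \<times> int, 'ag, 'p) kripke" where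
  "upd M w U \<alpha> =
     \<lparr> worlds = upd_worlds M w U \<alpha>,
       rel = (\<lambda>i. {((x, \<beta>), (u, \<gamma>)). (x, \<beta>) \<in> upd_worlds M w U \<alpha> \<and> (u, \<gamma>) \<in> upd_worlds M w U \<alpha>
                       \<and> (x, u) \<in> rel M i \<and> (\<beta>, \<gamma>) \<in> arel U i}),
       val = (\<lambda>p. {(x, \<beta>). (x, \<beta>) \<in> upd_worlds M w U \<alpha> \<and> x \<in> val M p}) \<rparr>"

definition iso_pointed :: "('a, 'ag, 'p) kripke \<Rightarrow> 'a \<Rightarrow> ('b, 'ag, 'p) kripke \<Rightarrow> 'b \<Rightarrow> bool" where
  "iso_pointed M1 w1 M2 w2 \<longleftrightarrow>
     (\<exists>f. bij_betw f (worlds M1) (worlds M2) \<and> f w1 = w2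
        \<and> (\<forall>i. \<forall>x\<in>worlds M1. \<forall>y\<in>worlds M1. (x, y) \<in> rel M1 i \<longleftrightarrow> (f x, f y) \<in> rel M2 i)
        \<and> (\<forall>p. \<forall>x\<in>worlds M1. x \<in> val M1 p \<longleftrightarrow> f x \<in> val M2 p))"

definition dset :: "('ag, 'p) amodel \<Rightarrow> int set" where
  "dset U = events U - {0, -1}"

definition uQ :: "('ag, 'p) amodel \<Rightarrow> 'ag \<Rightarrow> (int \<times> int) set" where
  "uQ U j = arel U j \<inter> ((events U - {0}) \<times> (events U - {0}))"

text \<open>\<open>U_of \<phi> U\<close>: U is (one admissible choice of fresh event names for) the action model
  \<open>U_\<phi>\<close> built by clauses (1)--(4).\<close>
inductive U_of :: "('ag, 'p) fm \<Rightarrow> ('ag, 'p) amodel \<Rightarrow> bool" where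
  U_B_prop: "propositional \<xi> \<Longrightarrow> m \<ge> 1 \<Longrightarrow>
    U_of (B i \<xi>)
      \<lparr> events = {0, -1, m},
        arel = (\<lambda>j. if j = i then {(0, m), (m, m), (-1, -1)} else {(0, -1), (m, -1), (-1, -1)}),
        pre = (\<lambda>e. if e = m then \<xi> else TT) \<rparr>"
| U_B: "U_of \<psi> U \<Longrightarrow> m \<ge> 1 \<Longrightarrow> m \<notin> dset U \<Longrightarrow>
    U_of (B i \<psi>)
      \<lparr> events = events U \<union> {m},
        arel = (\<lambda>j. if j = i then uQ U i \<union> {(0, m), (m, m)}
                    else uQ U j \<union> {(0, -1)} \<union> {(m, k) | k. (0, k) \<in> arel U j}),
        pre = (pre U)(m := TT) \<rparr>"
| U_B_conj: "propositional \<xi> \<Longrightarrow> U_of \<psi> U \<Longrightarrow> m \<ge> 1 \<Longrightarrow> m \<notin> dset U \<Longrightarrow>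
    U_of (B i (Conj \<xi> \<psi>))
      \<lparr> events = events U \<union> {m},
        arel = (\<lambda>j. if j = i then uQ U i \<union> {(0, m), (m, m)}
                    else uQ U j \<union> {(0, -1)} \<union> {(m, k) | k. (0, k) \<in> arel U j}),
        pre = (pre U)(m := \<xi>) \<rparr>"
| U_conj: "U_of \<psi> U1 \<Longrightarrow> U_of \<theta> U2 \<Longrightarrow> dset U1 \<inter> dset U2 = {} \<Longrightarrow>
    U_of (Conj \<psi> \<theta>)
      \<lparr> events = {0, -1} \<union> dset U1 \<union> dset U2,
        arel = (\<lambda>j. uQ U1 j \<union> uQ U2 j
                    \<union> {(0, k) | k. (0, k) \<in> arel U1 j \<union> arel U2 j \<and> k \<in> dset U1 \<union> dset U2}
                    \<union> (if \<exists>k. (0, k) \<in> arel U1 j \<union> arel U2 j \<and> k \<in> dset U1 \<union> dset U2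
                       then {} else {(0, -1)})),
        pre = (\<lambda>e. if e \<in> dset U1 then pre U1 e else if e \<in> dset U2 then pre U2 e else TT) \<rparr>"

end

theory Submission
  imports Defs
begin

lemma sat_TT[simp]: "sat M x TT"
  by (simp add: TT_def)

lemma prop_TT[simp]: "propositional TT"
  by (simp add: TT_def)

lemma sat_prop_upd:
  assumes "propositional f" "(x, \<beta>) \<in> upd_worlds M w U \<alpha>"
  shows "sat (upd M w U \<alpha>) (x, \<beta>) f = sat M x f"
  using assms by (induction f) (auto simp: upd_def)

lemma idem:
  assumes w: "w \<in> worlds M" and e0: "0 \<in> events U" and p0: "pre U 0 = TT"
    and pp: "\<And>e. propositional (pre U e)"
    and fn: "\<And>j e a b. (e, a) \<in> arel U j \<Longrightarrow> (e, b) \<in> arel U j \<Longrightarrow> a = b"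
  shows "upd_defined M w U 0
             \<and> upd_defined (upd M w U 0) (w, 0) U 0
             \<and> iso_pointed (upd M w U 0) (w, 0) (upd (upd M w U 0) (w, 0) U 0) ((w, 0), 0)"
proof -
  define N where "N = upd M w U 0"
  define N2 where "N2 = upd N (w, 0) U 0"
  have wN: "(w, 0) \<in> worlds N"
    unfolding N_def upd_def using w e0 p0 by (auto intro!: upd_worlds.base simp: upd_T_def)
  have L2': "snd p = \<gamma> \<and> p \<in> worlds N"
    if "(p, \<gamma>) \<in> upd_worlds N (w, 0) U 0" for p \<gamma>
    using that
  proof (induction rule: upd_worlds.induct)
    case base
    then show ?case using wN by simp
  next
    case (step a b c d i)
    have "c \<in> worlds N \<and> (snd a, snd c) \<in> arel U i"
      using \<open>(a, c) \<in> rel N i\<close> by (cases a, cases c) (simp add: N_def upd_def)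
    then show ?case using fn step.IH \<open>(b, d) \<in> arel U i\<close> by metis
  qed
  have L2: "\<beta> = \<gamma> \<and> (x, \<beta>) \<in> worlds N" if "((x, \<beta>), \<gamma>) \<in> upd_worlds N (w, 0) U 0" for x \<beta> \<gamma>
    using L2'[OF that] by auto
  have L3: "((x, \<beta>), \<beta>) \<in> upd_worlds N (w, 0) U 0" if "(x, \<beta>) \<in> upd_worlds M w U 0" for x \<beta>
    using that
  proof (induction rule: upd_worlds.induct)
    case base
    then show ?case using wN e0 p0 by (auto intro!: upd_worlds.base simp: upd_T_def)
  next
    case (step x \<beta> u \<gamma> i)
    have uN: "(u, \<gamma>) \<in> upd_worlds M w U 0"
      using step upd_worlds.step by fast
    have "((u, \<gamma>), \<gamma>) \<in> upd_T N U"
      using step uN pp sat_prop_upd[OF pp uN] unfolding upd_T_def N_def by (auto simp: upd_def)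
    moreover have "((x, \<beta>), (u, \<gamma>)) \<in> rel N i"
      using step uN unfolding N_def upd_def by auto
    ultimately show ?case using upd_worlds.step[OF step.IH] step by blast
  qed
  have wN': "(x, \<beta>) \<in> worlds N \<longleftrightarrow> (x, \<beta>) \<in> upd_worlds M w U 0" for x \<beta>
    unfolding N_def upd_def by simp
  have wN2: "y \<in> worlds N2 \<longleftrightarrow> y \<in> upd_worlds N (w, 0) U 0" for y
    unfolding N2_def upd_def by simp
  define f where "f = (\<lambda>(x::'a, \<beta>::int). ((x, \<beta>), \<beta>))"
  have bij: "bij_betw f (worlds N) (worlds N2)"
  proof (rule bij_betw_imageI)
    show "inj_on f (worlds N)" unfolding f_def inj_on_def by auto
    show "f ` worlds N = worlds N2"
    proof
      show "f ` worlds N \<subseteq> worlds N2" using L3 wN' wN2 unfolding f_def by auto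
      show "worlds N2 \<subseteq> f ` worlds N"
      proof
        fix y assume "y \<in> worlds N2"
        then obtain x \<beta> \<gamma> where y: "y = ((x, \<beta>), \<gamma>)" "((x, \<beta>), \<gamma>) \<in> upd_worlds N (w, 0) U 0"
          using wN2 by (metis prod.collapse)
        with L2 have "\<beta> = \<gamma>" "(x, \<beta>) \<in> worlds N" by blast+
        then show "y \<in> f ` worlds N" using y unfolding f_def by force
      qed
    qed
  qed
  have rel: "\<forall>i. \<forall>x\<in>worlds N. \<forall>y\<in>worlds N. (x, y) \<in> rel N i \<longleftrightarrow> (f x, f y) \<in> rel N2 i"
  proof (intro allI ballI)
    fix i x y assume x: "x \<in> worlds N" and y: "y \<in> worlds N"
    have "f x \<in> worlds N2" "f y \<in> worlds N2" using bij x y bij_betw_apply by fast+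
    then show "(x, y) \<in> rel N i \<longleftrightarrow> (f x, f y) \<in> rel N2 i"
      using x y unfolding f_def N2_def by (cases x, cases y) (auto simp: upd_def N_def)
  qed
  have val: "\<forall>p. \<forall>x\<in>worlds N. x \<in> val N p \<longleftrightarrow> f x \<in> val N2 p"
  proof (intro allI ballI)
    fix p x assume x: "x \<in> worlds N"
    have "f x \<in> worlds N2" using bij x bij_betw_apply by fast
    then show "x \<in> val N p \<longleftrightarrow> f x \<in> val N2 p"
      using x unfolding f_def N2_def by (cases x) (auto simp: upd_def N_def)
  qed
  have iso: "iso_pointed N (w, 0) N2 ((w, 0), 0)"
    unfolding iso_pointed_def using bij rel val by (intro exI[of _ f]) (auto simp: f_def)
  have "upd_defined M w U 0" using w e0 p0 by (simp add: upd_defined_def)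
  moreover have "upd_defined N (w, 0) U 0" using wN e0 p0 by (simp add: upd_defined_def)
  ultimately show ?thesis using iso unfolding N_def N2_def by simp
qed

lemma U_of_not_prop: "U_of \<phi> U \<Longrightarrow> \<not> propositional \<phi>"
  by (induction rule: U_of.induct) auto

lemma U_of_inv:
  "U_of \<phi> U \<Longrightarrow> 0 \<in> events U \<and> pre U 0 = TT \<and> (\<forall>e. propositional (pre U e))
     \<and> (\<forall>j k. (-1, k) \<in> arel U j \<longrightarrow> k = -1)
     \<and> (\<forall>j k. (0, k) \<in> arel U j \<longrightarrow> k = -1 \<or> j \<in> ta \<phi>)"
  by (induction rule: U_of.induct) (auto simp: uQ_def dset_def)

lemma U_of_fn:
  "U_of \<phi> U \<Longrightarrow> dbi_normal \<phi> \<Longrightarrow> (\<forall>j e a b. (e, a) \<in> arel U j \<longrightarrow> (e, b) \<in> arel U j \<longrightarrow> a = b)"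
proof (induction rule: U_of.induct)
  case (U_B_prop \<xi> m i)
  then show ?case by auto
next
  case (U_B \<psi> U m i)
  have "dbi_normal \<psi>"
    using U_B.prems U_B.hyps(1) U_of_not_prop
    by (cases rule: dbi_normal.cases) (auto elim: U_of.cases)
  with U_B have fn: "\<forall>j e a b. (e, a) \<in> arel U j \<longrightarrow> (e, b) \<in> arel U j \<longrightarrow> a = b" by blast
  have "m \<notin> events U" using U_B.hyps(2,3) by (auto simp: dset_def)
  then show ?case using fn U_B.hyps(2) by (auto simp: uQ_def)
next
  case (U_B_conj \<xi> \<psi> U m i)
  have "dbi_normal \<psi>"
    using U_B_conj.prems U_B_conj.hyps(1,2) U_of_not_prop
    by (cases rule: dbi_normal.cases) (auto elim: U_of.cases dbi_normal.cases)
  with U_B_conj have fn: "\<forall>j e a b. (e, a) \<in> arel U j \<longrightarrow> (e, b) \<in> arel U j \<longrightarrow> a = b" by blast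
  have "m \<notin> events U" using U_B_conj.hyps(3,4) by (auto simp: dset_def)
  then show ?case using fn U_B_conj.hyps(3) by (auto simp: uQ_def)
next
  case (U_conj \<psi> U1 \<theta> U2)
  from U_conj.prems have n: "dbi_normal \<psi>" "dbi_normal \<theta>" "ta \<psi> \<inter> ta \<theta> = {}"
    by (auto elim: dbi_normal.cases)
  with U_conj have f1: "\<forall>j e a b. (e, a) \<in> arel U1 j \<longrightarrow> (e, b) \<in> arel U1 j \<longrightarrow> a = b"
    and f2: "\<forall>j e a b. (e, a) \<in> arel U2 j \<longrightarrow> (e, b) \<in> arel U2 j \<longrightarrow> a = b" by blast+
  have i1: "\<forall>j k. (-1, k) \<in> arel U1 j \<longrightarrow> k = -1" "\<forall>j k. (0, k) \<in> arel U1 j \<longrightarrow> k = -1 \<or> j \<in> ta \<psi>"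
    using U_of_inv[OF U_conj.hyps(1)] by auto
  have i2: "\<forall>j k. (-1, k) \<in> arel U2 j \<longrightarrow> k = -1" "\<forall>j k. (0, k) \<in> arel U2 j \<longrightarrow> k = -1 \<or> j \<in> ta \<theta>"
    using U_of_inv[OF U_conj.hyps(2)] by auto
  have d: "dset U1 \<inter> dset U2 = {}" by fact
  show ?case
  proof (intro allI impI)
    fix j e a b
    assume a: "(e, a) \<in> arel \<lparr> events = {0, -1} \<union> dset U1 \<union> dset U2,
        arel = (\<lambda>j. uQ U1 j \<union> uQ U2 j
                    \<union> {(0, k) | k. (0, k) \<in> arel U1 j \<union> arel U2 j \<and> k \<in> dset U1 \<union> dset U2}
                    \<union> (if \<exists>k. (0, k) \<in> arel U1 j \<union> arel U2 j \<and> k \<in> dset U1 \<union> dset U2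
                       then {} else {(0, -1)})),
        pre = (\<lambda>e. if e \<in> dset U1 then pre U1 e else if e \<in> dset U2 then pre U2 e else TT) \<rparr> j"
       and b: "(e, b) \<in> arel \<lparr> events = {0, -1} \<union> dset U1 \<union> dset U2,
        arel = (\<lambda>j. uQ U1 j \<union> uQ U2 j
                    \<union> {(0, k) | k. (0, k) \<in> arel U1 j \<union> arel U2 j \<and> k \<in> dset U1 \<union> dset U2}
                    \<union> (if \<exists>k. (0, k) \<in> arel U1 j \<union> arel U2 j \<and> k \<in> dset U1 \<union> dset U2
                       then {} else {(0, -1)})),
        pre = (\<lambda>e. if e \<in> dset U1 then pre U1 e else if e \<in> dset U2 then pre U2 e else TT) \<rparr> j"
    show "a = b"
    proof (cases "e = 0")
      case True
      have "k = -1 \<or> j \<in> ta \<psi>" if "(0, k) \<in> arel U1 j" for k using i1 that by blast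
      moreover have "k = -1 \<or> j \<in> ta \<theta>" if "(0, k) \<in> arel U2 j" for k using i2 that by blast
      moreover have "-1 \<notin> dset U1" "-1 \<notin> dset U2" by (auto simp: dset_def)
      moreover have "-1 \<notin> dset U1 \<union> dset U2" by (auto simp: dset_def)
      moreover have ca: "(((0, a) \<in> arel U1 j \<or> (0, a) \<in> arel U2 j) \<and> a \<in> dset U1 \<union> dset U2)
          \<or> (a = -1 \<and> \<not> (\<exists>k. (0, k) \<in> arel U1 j \<union> arel U2 j \<and> k \<in> dset U1 \<union> dset U2))"
        using a True by (simp add: uQ_def split: if_splits)
      moreover have cb: "(((0, b) \<in> arel U1 j \<or> (0, b) \<in> arel U2 j) \<and> b \<in> dset U1 \<union> dset U2)
          \<or> (b = -1 \<and> \<not> (\<exists>k. (0, k) \<in> arel U1 j \<union> arel U2 j \<and> k \<in> dset U1 \<union> dset U2))"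
        using b True by (simp add: uQ_def split: if_splits)
      ultimately show ?thesis using f1 f2 n(3) by blast
    next
      case False
      then have a': "(e, a) \<in> uQ U1 j \<union> uQ U2 j" and b': "(e, b) \<in> uQ U1 j \<union> uQ U2 j"
        using a b by (auto split: if_splits)
      show ?thesis
      proof (cases "e = -1")
        case True
        have "a = -1" "b = -1" using a' b' i1(1) i2(1) True unfolding uQ_def by blast+
        then show ?thesis by simp
      next
        case False
        then show ?thesis using a' b' f1 f2 d by (auto simp: uQ_def dset_def)
      qed
    qed
  qed
qed


lemma U_exists:
  "dbi_normal \<phi> \<Longrightarrow> N \<ge> 1 \<Longrightarrow> \<exists>U. U_of \<phi> U \<and> finite (dset U) \<and> dset U \<subseteq> {N..}"
proof (induction \<phi> arbitrary: N rule: dbi_normal.induct)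
  case (dn_B_prop \<xi> i)
  show ?case
    by (rule exI, rule conjI, rule U_of.U_B_prop[OF dn_B_prop(1), of N], use dn_B_prop in \<open>auto simp: dset_def\<close>)
next
  case (dn_B \<phi> i)
  obtain U where U: "U_of \<phi> U" "finite (dset U)" "dset U \<subseteq> {N+1..}"
    using dn_B.IH[of "N+1"] dn_B.prems by auto
  have m: "N \<notin> dset U" using U(3) by auto
  show ?case
    by (rule exI, rule conjI, rule U_of.U_B[OF U(1) dn_B.prems m], use U dn_B.prems in \<open>auto simp: dset_def\<close>)
next
  case (dn_B_conj \<xi> \<phi> i)
  obtain U where U: "U_of \<phi> U" "finite (dset U)" "dset U \<subseteq> {N+1..}"
    using dn_B_conj.IH[of "N+1"] dn_B_conj.prems by auto
  have m: "N \<notin> dset U" using U(3) by auto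
  show ?case
    by (rule exI, rule conjI, rule U_of.U_B_conj[OF dn_B_conj(1) U(1) dn_B_conj.prems m],
        use U dn_B_conj.prems in \<open>auto simp: dset_def\<close>)
next
  case (dn_conj \<phi> \<psi>)
  obtain U1 where U1: "U_of \<phi> U1" "finite (dset U1)" "dset U1 \<subseteq> {N..}"
    using dn_conj.IH(1)[of N] dn_conj.prems by auto
  define N2 where "N2 = Max (insert N (dset U1)) + 1"
  have N2: "N2 \<ge> 1" "\<forall>x\<in>dset U1. x < N2"
    using U1(2) dn_conj.prems unfolding N2_def by (auto simp: Max_ge_iff)
  obtain U2 where U2: "U_of \<psi> U2" "finite (dset U2)" "dset U2 \<subseteq> {N2..}"
    using dn_conj.IH(2)[of N2] N2 by auto
  have d: "dset U1 \<inter> dset U2 = {}" using N2 U2(3) by force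
  have NN: "N \<le> N2" proof -
    have "N \<le> Max (insert N (dset U1))" using U1(2) by simp
    then show ?thesis unfolding N2_def by simp
  qed
  show ?case
    apply (rule exI, rule conjI, rule U_of.U_conj[OF U1(1) U2(1) d])
    using U1 U2 NN by (auto simp: dset_def)
qed

theorem theorem7:
  fixes \<phi> :: "('ag :: finite, 'p) fm"
  assumes "card (UNIV :: 'ag set) > 1"
    and "dbi_normal \<phi>"
  shows "(\<exists>U. U_of \<phi> U) \<and>
         (\<forall>U. U_of \<phi> U \<longrightarrow>
            (\<forall>(M :: ('w, 'ag, 'p) kripke) w. kripke_wf M \<and> w \<in> worlds M \<longrightarrow>
               upd_defined M w U 0
             \<and> upd_defined (upd M w U 0) (w, 0) U 0
             \<and> iso_pointed (upd M w U 0) (w, 0) (upd (upd M w U 0) (w, 0) U 0) ((w, 0), 0)))"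
proof (rule conjI)
  show "\<exists>U. U_of \<phi> U" using U_exists[OF assms(2), of 1] by auto
next
  show "\<forall>U. U_of \<phi> U \<longrightarrow>
            (\<forall>(M :: ('w, 'ag, 'p) kripke) w. kripke_wf M \<and> w \<in> worlds M \<longrightarrow>
               upd_defined M w U 0
             \<and> upd_defined (upd M w U 0) (w, 0) U 0
             \<and> iso_pointed (upd M w U 0) (w, 0) (upd (upd M w U 0) (w, 0) U 0) ((w, 0), 0))"
  proof (intro allI impI)
  fix U and M :: "('w, 'ag, 'p) kripke" and w
  assume U: "U_of \<phi> U" and Mw: "kripke_wf M \<and> w \<in> worlds M"
  have inv: "0 \<in> events U" "pre U 0 = TT" "\<And>e. propositional (pre U e)"
    using U_of_inv[OF U] by auto
  have fn: "\<And>j e a b. (e, a) \<in> arel U j \<Longrightarrow> (e, b) \<in> arel U j \<Longrightarrow> a = b"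
    using U_of_fn[OF U assms(2)] by blast
  show "upd_defined M w U 0
             \<and> upd_defined (upd M w U 0) (w, 0) U 0
             \<and> iso_pointed (upd M w U 0) (w, 0) (upd (upd M w U 0) (w, 0) U 0) ((w, 0), 0)"
  proof -
    have "w \<in> worlds M" using Mw by simp
    from idem[OF this inv(1) inv(2) inv(3) fn] show ?thesis .
  qed
  qed
qed

end
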